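(* Let $A$ be a finite set and $p : A \to [0,1]$. Let $\{X_i(u)\}_{i \ge 1, u \in A}$ be independent random variables with $X_i(u) \sim \mathrm{Bernoulli}(p(u))$. For $n \ge 1$ define $U_n(u) := \mathds{1}\{\sum_{i=1}^n X_i(u) = 1\}$, $\hat R_n := \frac{1}{n}\sum_{u \in A} U_n(u)$, and $\lambda := \sum_{u \in A} p(u)$. Then for every integer $s \ge 3$ and every $\delta \in (0,1)$, \[ \mathbb{P}\left( \hat R_s \le \hat R_{s-1} - \frac{\lambda}{e(s-2)} - \sqrt{\frac{2\lambda}{s-1}\log(1/\delta)} - \frac{1}{3(s-1)}\log(1/\delta) \right) \le \delta . \]
   Context: Model: a single influencer is connected to a finite set $A$ of basic nodes; at each selection $i$, each node $u\in A$ is activated independently with probability $p(u)$, independently across selections. $\hat R_n$ is the Good-Turing estimator of the remaining potential after $n$ selections; $e$ is Euler's number. *)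

theory Defs
  imports "HOL-Probability.Probability"
begin

definition U :: "(nat \<Rightarrow> 'a \<Rightarrow> 'w \<Rightarrow> bool) \<Rightarrow> nat \<Rightarrow> 'a \<Rightarrow> 'w \<Rightarrow> real" where
  "U X n u w = (if card {i \<in> {1..n}. X i u w} = 1 then 1 else 0)"

definition Rhat :: "(nat \<Rightarrow> 'a \<Rightarrow> 'w \<Rightarrow> bool) \<Rightarrow> 'a set \<Rightarrow> nat \<Rightarrow> 'w \<Rightarrow> real" where
  "Rhat X A n w = (1 / real n) * (\<Sum>u\<in>A. U X n u w)"

end

theory Submission
  imports Defs
begin


lemma fact_ge_pow3: "2 * 3 ^ k \<le> (fact (k + 2) :: real)"
proof (induction k)
  case 0 then show ?case by simp
next
  case (Suc k)
  have "fact (Suc k + 2) = real (k + 3) * fact (k + 2)"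
    by (simp add: fact_Suc algebra_simps)
  also have "\<dots> \<ge> 3 * (2 * 3 ^ k)"
    using Suc by (intro mult_mono) auto
  finally show ?case by simp
qed

lemma exp_bernstein_bound:
  fixes x :: real assumes "0 \<le> x" "x < 3"
  shows "exp x \<le> 1 + x + x^2 / (2 * (1 - x / 3))"
proof -
  have s: "(\<lambda>n. x^n / fact n) sums exp x"
    using exp_converges[of x] by (simp add: divide_inverse_commute scaleR_conv_of_real mult.commute)
  have s2: "(\<lambda>n. x^(n+2) / fact (n+2)) sums (exp x - (1 + x))"
    using s by (subst sums_iff_shift) (simp add: numeral_2_eq_2)
  have g: "(\<lambda>n. x^2/2 * (x/3)^n) sums (x^2/2 * (1 / (1 - x/3)))"
    using assms by (intro sums_mult geometric_sums) auto
  have le: "x^(n+2) / fact (n+2) \<le> x^2/2 * (x/3)^n" for n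
  proof -
    have "x^(n+2) / fact (n+2) \<le> x^(n+2) / (2 * 3^n)"
      using fact_ge_pow3[of n] assms by (intro divide_left_mono) auto
    also have "\<dots> = x^2/2 * (x/3)^n" by (simp add: power_add power_divide power2_eq_square)
    finally show ?thesis .
  qed
  have "exp x - (1 + x) \<le> x^2/2 * (1 / (1 - x/3))"
    by (rule sums_le[OF le s2 g])
  then show ?thesis by simp
qed

lemma exp_neg_bound:
  fixes x :: real assumes "x \<le> 0"
  shows "exp x \<le> 1 + x + x^2 / 2"
proof -
  have d: "((\<lambda>y. 1 + y + y^2/2 - exp y) has_real_derivative (1 + y - exp y)) (at y)" for y
    by (auto intro!: derivative_eq_intros)
  have "1 + x + x^2/2 - exp x \<ge> 1 + 0 + 0^2/2 - exp 0"
  proof (rule DERIV_nonpos_imp_nonincreasing[OF assms])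
    fix y :: real assume "x \<le> y" "y \<le> 0"
    show "\<exists>d. ((\<lambda>y. 1 + y + y^2/2 - exp y) has_real_derivative d) (at y) \<and> d \<le> 0"
      using d[of y] exp_ge_add_one_self[of y] by (intro exI[of _ "1 + y - exp y"]) auto
  qed
  then show ?thesis by simp
qed

lemma pq_bound:
  fixes p :: real and n :: nat assumes "0 \<le> p" "p \<le> 1" "n \<ge> 1"
  shows "p * (1 - p) ^ n \<le> 1 / (exp 1 * n)"
proof -
  have "(1 - p) ^ n \<le> exp (-p) ^ n"
    using assms using exp_ge_add_one_self[of "-p"] by (intro power_mono) auto
  also have "\<dots> = exp (- (n * p))" by (simp add: exp_of_nat_mult[symmetric])
  finally have a: "p * (1 - p) ^ n \<le> p * exp (- (n * p))"
    using assms by (intro mult_left_mono) auto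
  have "n * p \<le> exp (n * p - 1)" using exp_ge_add_one_self[of "n*p - 1"] by simp
  then have "n * p * exp (- (n*p)) \<le> exp (n*p - 1) * exp (-(n*p))"
    by (intro mult_right_mono) auto
  also have "\<dots> = exp (-1)" by (simp add: exp_add[symmetric])
  finally have "p * exp (- (n * p)) \<le> exp (-1) / n"
    using assms by (simp add: field_simps)
  also have "\<dots> = 1 / (exp 1 * n)" by (simp add: exp_minus field_simps)
  finally show ?thesis using a by linarith
qed

lemma var_bound:
  fixes p :: real and n :: nat assumes "0 \<le> p" "p \<le> 1"
  shows "(1 - p) ^ n * (1 + n * p) \<le> 1"
proof -
  have "1 + n * p \<le> (1 + p) ^ n" using Bernoulli_inequality[of p n] assms by simp
  then have "(1 - p) ^ n * (1 + n * p) \<le> (1 - p) ^ n * (1 + p) ^ n"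
    using assms by (intro mult_left_mono) auto
  also have "\<dots> = (1 - p^2) ^ n" by (simp add: power_mult_distrib[symmetric] algebra_simps power2_eq_square)
  also have "\<dots> \<le> 1" using assms by (intro power_le_one) (auto simp: power_le_one)
  finally show ?thesis .
qed



definition Tval :: "nat \<Rightarrow> nat set \<Rightarrow> real" where
  "Tval m S = (if card (S - {Suc m}) = 1 then 1 else 0) - real m / real (Suc m) * (if card S = 1 then 1 else 0)"

lemma Tval_exp:
  assumes S: "S \<subseteq> {1..Suc m}"
  shows "exp (\<theta> * Tval m S) = 1 + (exp (\<theta> / Suc m) - 1) * (if \<exists>j\<in>{1..m}. S = {j} then 1 else 0)
     + (exp \<theta> - 1) * (if \<exists>j\<in>{1..m}. S = {j, Suc m} then 1 else 0)
     + (exp (- \<theta> * m / Suc m) - 1) * (if S = {Suc m} then 1 else 0)"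
proof -
  have fin: "finite S" using S finite_subset by blast
  consider (a) "\<exists>j\<in>{1..m}. S = {j}" | (b) "\<exists>j\<in>{1..m}. S = {j, Suc m}" | (c) "S = {Suc m}"
    | (d) "\<not>(\<exists>j\<in>{1..m}. S = {j})" "\<not>(\<exists>j\<in>{1..m}. S = {j, Suc m})" "S \<noteq> {Suc m}" by blast
  then show ?thesis
  proof cases
    case a
    then obtain j where j: "j \<in> {1..m}" "S = {j}" by blast
    have "Tval m S = 1 - real m / real (Suc m)" using j by (auto simp: Tval_def)
    also have "\<dots> = 1 / Suc m" by (simp add: field_simps)
    finally have "exp (\<theta> * Tval m S) = exp (\<theta> / Suc m)" by simp
    moreover have "\<not>(\<exists>j\<in>{1..m}. S = {j, Suc m})" "S \<noteq> {Suc m}" using j by auto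
    ultimately show ?thesis using a by simp
  next
    case b
    then obtain j where j: "j \<in> {1..m}" "S = {j, Suc m}" by blast
    have "S - {Suc m} = {j}" using j by auto
    moreover have "card S = 2" using j by auto
    ultimately have "Tval m S = 1" by (simp add: Tval_def)
    moreover have "\<not>(\<exists>j\<in>{1..m}. S = {j})" "S \<noteq> {Suc m}" using j by (auto simp: doubleton_eq_iff)
    ultimately show ?thesis using b by simp
  next
    case c
    then have "Tval m S = - real m / real (Suc m)" by (simp add: Tval_def)
    then have "exp (\<theta> * Tval m S) = exp (- \<theta> * m / Suc m)" by simp
    moreover have "\<not>(\<exists>j\<in>{1..m}. S = {j})" "\<not>(\<exists>j\<in>{1..m}. S = {j, Suc m})" using c by auto
    ultimately show ?thesis using c by simp
  next
    case d
    have "card S \<noteq> 1"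
    proof
      assume "card S = 1"
      then obtain j where "S = {j}" by (auto simp: card_Suc_eq)
      then show False using d S by (cases "j = Suc m") auto
    qed
    moreover have "card (S - {Suc m}) \<noteq> 1"
    proof
      assume "card (S - {Suc m}) = 1"
      then obtain j where j: "S - {Suc m} = {j}" by (auto simp: card_Suc_eq)
      then have "j \<in> S" "j \<noteq> Suc m" by auto
      then have "j \<in> {1..m}" using S by auto
      moreover have "S = {j} \<or> S = {j, Suc m}" using j by auto
      ultimately show False using d by auto
    qed
    ultimately have "Tval m S = 0" by (simp add: Tval_def)
    then show ?thesis using d by simp
  qed
qed

lemma MG_alg: "s \<noteq> (0::real) \<Longrightarrow> 1 + (\<theta>/s + \<psi>/s^2)*((s-1)*p*Q) + (\<theta>+\<psi>)*b + (-\<theta>*(s-1)/s + \<psi>*(s-1)^2/s^2)*(p*Q) = 1 + \<theta>*b + \<psi>*(b + (s-1)*p*Q/s)"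
  by (simp add: field_simps power2_eq_square)

definition MG :: "nat \<Rightarrow> real \<Rightarrow> real \<Rightarrow> real" where
  "MG m \<theta> p = 1 + (exp (\<theta> / Suc m) - 1) * (m * p * (1 - p) ^ m)
     + (exp \<theta> - 1) * (m * p^2 * (1 - p) ^ (m - 1))
     + (exp (- \<theta> * m / Suc m) - 1) * (p * (1 - p) ^ m)"

lemma MG_zero: "MG m \<theta> 0 = 1" by (simp add: MG_def)

lemma MG_bound:
  assumes p: "0 \<le> p" "p \<le> 1" and m: "m \<ge> 2" and th: "0 \<le> \<theta>" "\<theta> < 3"
  shows "MG m \<theta> p \<le> exp (\<theta> * (p * m / (exp 1 * (m - 1))) + \<theta>^2 / (2 * (1 - \<theta>/3)) * p)"
proof -
  define \<psi> where "\<psi> = \<theta>^2 / (2 * (1 - \<theta>/3))"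
  define q where "q = 1 - p"
  define s where "s = real (Suc m)"
  have q: "0 \<le> q" "q \<le> 1" using p by (auto simp: q_def)
  have s: "s = m + 1" "s > 0" "s \<ge> 3" using m by (auto simp: s_def)
  have psi0: "\<psi> \<ge> \<theta>^2/2" using th by (auto simp: \<psi>_def field_simps)
  have c1: "exp (\<theta> / s) - 1 \<le> \<theta> / s + \<psi> / s^2"
  proof -
    have "\<theta> / s \<le> \<theta>" using th s by (auto simp: field_simps)
    have "exp (\<theta> / s) \<le> 1 + \<theta>/s + (\<theta>/s)^2 / (2 * (1 - (\<theta>/s)/3))"
      using th s \<open>\<theta> / s \<le> \<theta>\<close> by (intro exp_bernstein_bound) auto
    also have "(\<theta>/s)^2 / (2 * (1 - (\<theta>/s)/3)) \<le> (\<theta>/s)^2 / (2 * (1 - \<theta>/3))"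
    proof -
      have "2 * (1 - \<theta>/3) \<le> 2 * (1 - (\<theta>/s)/3)" using \<open>\<theta> / s \<le> \<theta>\<close> by simp
      then show ?thesis using th by (intro divide_left_mono mult_pos_pos) auto
    qed
    also have "\<dots> = \<psi> / s^2" by (simp add: \<psi>_def power_divide)
    finally show ?thesis by simp
  qed
  have c2: "exp \<theta> - 1 \<le> \<theta> + \<psi>"
    using exp_bernstein_bound[OF th] by (simp add: \<psi>_def)
  have c3: "exp (- \<theta> * m / s) - 1 \<le> - \<theta> * m / s + \<psi> * m^2 / s^2"
  proof -
    have "exp (- \<theta> * m / s) \<le> 1 + (- \<theta> * m / s) + (- \<theta> * m / s)^2/2"
      using th s by (intro exp_neg_bound) (auto simp: field_simps)
    also have "(- \<theta> * m / s)^2/2 = \<theta>^2/2 * m^2/s^2" by (simp add: power_divide power_mult_distrib)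
    also have "\<dots> \<le> \<psi> * m^2/s^2" using psi0 by (intro divide_right_mono mult_right_mono) auto
    finally show ?thesis by simp
  qed
  have a0: "0 \<le> m * p * q ^ m" "0 \<le> m * p^2 * q ^ (m - 1)" "0 \<le> p * q ^ m"
    using p q by auto
  have "MG m \<theta> p \<le> 1 + (\<theta> / s + \<psi> / s^2) * (m * p * q ^ m) + (\<theta> + \<psi>) * (m * p^2 * q ^ (m - 1))
       + (- \<theta> * m / s + \<psi> * m^2 / s^2) * (p * q ^ m)"
    unfolding MG_def q_def[symmetric] s_def[symmetric]
    using c1 c2 c3 a0 by (intro add_mono mult_right_mono) auto
  also have "\<dots> = 1 + \<theta> * (m * p^2 * q ^ (m - 1)) + \<psi> * (m * p^2 * q ^ (m - 1) + m * p * q^m / s)"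
    using MG_alg[of s \<theta> \<psi> p "q^m" "m * p^2 * q ^ (m - 1)"] s by simp
  also have "\<dots> \<le> 1 + \<theta> * (p * m / (exp 1 * (m - 1))) + \<psi> * p"
  proof -
    have qm: "q ^ m = q * q ^ (m - 1)" using m by (cases m) auto
    have "p * q ^ (m - 1) \<le> 1 / (exp 1 * (m - 1))"
      using pq_bound[OF p, of "m - 1"] m q_def by (simp add: of_nat_diff)
    then have "m * p * (p * q ^ (m - 1)) \<le> m * p * (1 / (exp 1 * (m - 1)))"
      using p by (intro mult_left_mono) auto
    then have A: "m * p^2 * q ^ (m - 1) \<le> p * m / (exp 1 * (m - 1))"
      by (simp add: power2_eq_square mult_ac)
    have "m * p^2 * q ^ (m - 1) + m * p * q^m / s \<le> m * p^2 * q ^ (m - 1) + p * q^m"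
    proof -
      have "m / s \<le> 1" using s by auto
      then have "(m / s) * (p * q^m) \<le> 1 * (p * q^m)" using p q by (intro mult_right_mono) auto
      then show ?thesis by simp
    qed
    also have "\<dots> = p * (q ^ (m - 1) * (1 + (m - 1) * p))"
      using m unfolding qm by (simp add: field_simps power2_eq_square of_nat_diff) (simp add: q_def algebra_simps)
    also have "\<dots> \<le> p * 1"
      using var_bound[OF p, of "m - 1"] p unfolding q_def by (intro mult_left_mono) auto
    finally have B: "m * p^2 * q ^ (m - 1) + m * p * q^m / s \<le> p" by simp
    have psi_nn: "\<psi> \<ge> 0" using psi0 by (smt (verit) zero_le_power2 divide_nonneg_nonneg)
    show ?thesis using A B th psi_nn by (intro add_mono mult_left_mono) auto
  qed
  also have "\<dots> \<le> exp (\<theta> * (p * m / (exp 1 * (m - 1))) + \<psi> * p)"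
    using exp_ge_add_one_self by (simp add: add.assoc)
  finally show ?thesis using m by (simp add: \<psi>_def of_nat_diff)
qed



lemma pattern_prob:
  fixes M :: "'w measure" and A :: "'a set" and p :: "'a \<Rightarrow> real"
    and X :: "nat \<Rightarrow> 'a \<Rightarrow> 'w \<Rightarrow> bool"
  assumes P: "prob_space M"
    and ind: "prob_space.indep_vars M (\<lambda>_. count_space UNIV) (\<lambda>(i, u). X i u) ({1..} \<times> A)"
    and dist: "\<forall>i\<ge>1. \<forall>u\<in>A. distr M (count_space UNIV) (X i u) = measure_pmf (bernoulli_pmf (p u))"
    and u: "u \<in> A" and pu: "0 \<le> p u" "p u \<le> 1" and G: "G \<subseteq> {1..n}" and n: "n \<ge> 1"
  shows "{\<omega>\<in>space M. {i\<in>{1..n}. X i u \<omega>} = G} \<in> sets M"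
    and "measure M {\<omega>\<in>space M. {i\<in>{1..n}. X i u \<omega>} = G} = p u ^ card G * (1 - p u) ^ (n - card G)"
proof -
  interpret prob_space M by fact
  have rv: "X i u \<in> measurable M (count_space UNIV)" if "i \<ge> 1" for i
    using ind u that unfolding indep_vars_def by auto
  have single: "prob (X i u -` {b} \<inter> space M) = (if b then p u else 1 - p u)" if "i \<ge> 1" for i b
  proof -
    have "prob (X i u -` {b} \<inter> space M) = measure (distr M (count_space UNIV) (X i u)) {b}"
      using rv[OF that] by (simp add: measure_distr)
    also have "\<dots> = measure (measure_pmf (bernoulli_pmf (p u))) {b}" using dist u that by simp
    also have "\<dots> = (if b then p u else 1 - p u)" using pu by (simp add: measure_pmf_single)
    finally show ?thesis .
  qed
  define F where "F = (\<lambda>(i, v). X i v -` {i \<in> G} \<inter> space M)"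
  define K where "K = (\<lambda>i. (i, u)) ` {1..n}"
  have eq: "{\<omega>\<in>space M. {i\<in>{1..n}. X i u \<omega>} = G} = (\<Inter>k\<in>K. F k)"
  proof -
    have "{\<omega>\<in>space M. {i\<in>{1..n}. X i u \<omega>} = G} = {\<omega>\<in>space M. \<forall>i\<in>{1..n}. X i u \<omega> = (i \<in> G)}"
      using G by blast
    also have "\<dots> = (\<Inter>k\<in>K. F k)" using n by (auto simp: K_def F_def)
    finally show ?thesis .
  qed
  have FK: "F k \<in> sets M" if "k \<in> K" for k
    using that rv by (auto simp: K_def F_def)
  show "{\<omega>\<in>space M. {i\<in>{1..n}. X i u \<omega>} = G} \<in> sets M"
    unfolding eq using n FK by (intro sets.finite_INT) (auto simp: K_def)
  have "indep_sets (\<lambda>k. sigma_sets (space M) {(\<lambda>(i, u). X i u) k -` B \<inter> space M | B. B \<in> sets (count_space UNIV)}) ({1..} \<times> A)"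
    using ind unfolding indep_vars_def by auto
  then have "prob (\<Inter>k\<in>K. F k) = (\<Prod>k\<in>K. prob (F k))"
  proof (rule indep_setsD)
    show "K \<subseteq> {1..} \<times> A" "K \<noteq> {}" "finite K" using u n by (auto simp: K_def)
    show "\<forall>k\<in>K. F k \<in> sigma_sets (space M) {(\<lambda>(i, u). X i u) k -` B \<inter> space M |B. B \<in> sets (count_space UNIV)}"
      by (auto simp: K_def F_def intro!: sigma_sets.Basic)
  qed
  also have "\<dots> = (\<Prod>i\<in>{1..n}. prob (F (i, u)))"
    unfolding K_def by (subst prod.reindex) (auto simp: inj_on_def)
  also have "\<dots> = (\<Prod>i\<in>{1..n}. if i \<in> G then p u else 1 - p u)"
    by (intro prod.cong refl) (simp add: F_def single)
  also have "\<dots> = p u ^ card G * (1 - p u) ^ (n - card G)"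
  proof -
    have "{1..n} \<inter> {i. i \<in> G} = G" "{1..n} \<inter> - {i. i \<in> G} = {1..n} - G" using G by auto
    moreover have "card ({1..n} - G) = n - card G" using G by (simp add: card_Diff_subset finite_subset)
    ultimately show ?thesis by (simp add: prod.If_cases)
  qed
  finally show "measure M {\<omega>\<in>space M. {i\<in>{1..n}. X i u \<omega>} = G} = p u ^ card G * (1 - p u) ^ (n - card G)"
    using eq by simp
qed



lemma mgf_u:
  fixes M :: "'w measure" and A :: "'a set" and p :: "'a \<Rightarrow> real"
    and X :: "nat \<Rightarrow> 'a \<Rightarrow> 'w \<Rightarrow> bool"
  assumes P: "prob_space M"
    and ind: "prob_space.indep_vars M (\<lambda>_. count_space UNIV) (\<lambda>(i, u). X i u) ({1..} \<times> A)"
    and dist: "\<forall>i\<ge>1. \<forall>u\<in>A. distr M (count_space UNIV) (X i u) = measure_pmf (bernoulli_pmf (p u))"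
    and u: "u \<in> A" and pu: "0 \<le> p u" "p u \<le> 1" and m: "m \<ge> 1"
  shows "integrable M (\<lambda>\<omega>. exp (\<theta> * Tval m {i\<in>{1..Suc m}. X i u \<omega>}))"
    and "(\<integral>\<omega>. exp (\<theta> * Tval m {i\<in>{1..Suc m}. X i u \<omega>}) \<partial>M) = MG m \<theta> (p u)"
proof -
  interpret prob_space M by fact
  define S where "S = (\<lambda>\<omega>. {i\<in>{1..Suc m}. X i u \<omega>})"
  define B where "B = (\<lambda>G. {\<omega>\<in>space M. S \<omega> = G})"
  have Bs: "B G \<in> sets M" if "G \<subseteq> {1..Suc m}" for G
    unfolding B_def S_def by (rule pattern_prob(1)[OF P ind dist u pu that]) simp
  have Bm: "measure M (B G) = p u ^ card G * (1 - p u) ^ (Suc m - card G)" if "G \<subseteq> {1..Suc m}" for G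
    unfolding B_def S_def by (rule pattern_prob(2)[OF P ind dist u pu that]) simp
  define E1 where "E1 = (\<Union>j\<in>{1..m}. B {j})"
  define E2 where "E2 = (\<Union>j\<in>{1..m}. B {j, Suc m})"
  define E3 where "E3 = B {Suc m}"
  have E1s: "E1 \<in> sets M" unfolding E1_def using Bs by auto
  have E2s: "E2 \<in> sets M" unfolding E2_def using Bs by auto
  have E3s: "E3 \<in> sets M" unfolding E3_def using Bs by auto
  have dj: "disjoint_family_on (\<lambda>j. B (f j)) J" if "inj_on f J" for f :: "nat \<Rightarrow> nat set" and J
    using that unfolding disjoint_family_on_def B_def inj_on_def by auto
  have mE1: "measure M E1 = m * p u * (1 - p u) ^ m"
  proof -
    have "measure M E1 = (\<Sum>j\<in>{1..m}. measure M (B {j}))"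
      unfolding E1_def using Bs by (intro measure_finite_Union dj) (auto simp: inj_on_def)
    also have "\<dots> = (\<Sum>j\<in>{1..m}. p u * (1 - p u) ^ m)"
      by (intro sum.cong refl) (subst Bm, auto)
    finally show ?thesis by simp
  qed
  have mE2: "measure M E2 = m * (p u)^2 * (1 - p u) ^ (m - 1)"
  proof -
    have "measure M E2 = (\<Sum>j\<in>{1..m}. measure M (B {j, Suc m}))"
      unfolding E2_def using Bs by (intro measure_finite_Union dj) (auto simp: inj_on_def doubleton_eq_iff)
    also have "\<dots> = (\<Sum>j\<in>{1..m}. (p u)^2 * (1 - p u) ^ (m - 1))"
      by (intro sum.cong refl) (subst Bm, auto simp: power2_eq_square)
    finally show ?thesis by simp
  qed
  have mE3: "measure M E3 = p u * (1 - p u) ^ m"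
    unfolding E3_def by (subst Bm) auto
  define c1 where "c1 = exp (\<theta> / Suc m) - 1"
  define c2 where "c2 = exp \<theta> - 1"
  define c3 where "c3 = exp (- \<theta> * m / Suc m) - 1"
  have pw: "exp (\<theta> * Tval m (S \<omega>)) = 1 + c1 * indicator E1 \<omega> + c2 * indicator E2 \<omega> + c3 * indicator E3 \<omega>"
    if "\<omega> \<in> space M" for \<omega>
  proof -
    have "S \<omega> \<subseteq> {1..Suc m}" by (auto simp: S_def)
    from Tval_exp[OF this, of \<theta>] show ?thesis
      using that unfolding c1_def c2_def c3_def E1_def E2_def E3_def B_def indicator_def by auto
  qed
  have fin: "emeasure M E < \<top>" for E
    using emeasure_finite[of E] less_top by metis
  have int: "integrable M (\<lambda>\<omega>. 1 + c1 * indicator E1 \<omega> + c2 * indicator E2 \<omega> + c3 * indicator E3 \<omega> :: real)"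
    using E1s E2s E3s by (intro Bochner_Integration.integrable_add integrable_mult_right integrable_real_indicator) (auto simp: fin)
  show "integrable M (\<lambda>\<omega>. exp (\<theta> * Tval m {i\<in>{1..Suc m}. X i u \<omega>}))"
  proof (rule iffD2[OF Bochner_Integration.integrable_cong[OF refl]])
    show "exp (\<theta> * Tval m {i\<in>{1..Suc m}. X i u \<omega>}) = 1 + c1 * indicator E1 \<omega> + c2 * indicator E2 \<omega> + c3 * indicator E3 \<omega>"
      if "\<omega> \<in> space M" for \<omega> using pw[OF that] by (simp add: S_def)
  qed (rule int)
  have "(\<integral>\<omega>. exp (\<theta> * Tval m {i\<in>{1..Suc m}. X i u \<omega>}) \<partial>M) =
        (\<integral>\<omega>. 1 + c1 * indicator E1 \<omega> + c2 * indicator E2 \<omega> + c3 * indicator E3 \<omega> \<partial>M)"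
    by (intro Bochner_Integration.integral_cong refl) (use pw in \<open>simp add: S_def\<close>)
  also have "\<dots> = 1 + c1 * measure M E1 + c2 * measure M E2 + c3 * measure M E3"
    using E1s E2s E3s fin prob_space
    by (simp add: Bochner_Integration.integral_add integrable_real_indicator)
  also have "\<dots> = MG m \<theta> (p u)"
    unfolding MG_def mE1 mE2 mE3 c1_def c2_def c3_def by simp
  finally show "(\<integral>\<omega>. exp (\<theta> * Tval m {i\<in>{1..Suc m}. X i u \<omega>}) \<partial>M) = MG m \<theta> (p u)" .
qed



lemma aux1: "d \<noteq> (0::real) \<Longrightarrow> (3*r/d)^2/(2*(3/d)) = 3*r^2/(2*d)"
  by (simp add: field_simps power2_eq_square)

lemma aux2: "(m::real) \<noteq> 0 \<Longrightarrow> s \<noteq> 0 \<Longrightarrow> a - m/s*b = m*(1/m*a - 1/s*b)"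
  by (simp add: field_simps)

lemma aux3: "d \<noteq> (0::real) \<Longrightarrow> (3*r/d)*(2*r*lam + r^2*lam/3) - 3*r^2/(2*d)*lam = r^2*lam*(2*r + 9)/(2*d)"
  by (simp add: field_simps power2_eq_square)

lemma final_ineq:
  fixes lam L m r :: real
  assumes lam: "lam > 0" and L: "L > 0" and m: "m \<ge> 2" and r: "r = sqrt (L / lam)"
  shows "(3 * r / (r + 3)) * (m * sqrt (2 * lam / m * L) + L / 3)
           - (3 * r / (r + 3))^2 / (2 * (1 - (3 * r / (r + 3)) / 3)) * lam \<ge> L"
proof -
  have r0: "r > 0" using r lam L by simp
  have Leq: "L = r^2 * lam" using r lam L by simp
  have "(2 * r * lam / m)^2 \<le> 2 * lam / m * L"
  proof -
    have "(2 * r * lam / m)^2 = (2 / m) * (2 * lam / m * L)"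
      using m unfolding Leq by (simp add: field_simps power2_eq_square)
    also have "\<dots> \<le> 1 * (2 * lam / m * L)"
      using m lam L by (intro mult_right_mono) auto
    finally show ?thesis by simp
  qed
  then have "2 * r * lam / m \<le> sqrt (2 * lam / m * L)" by (rule real_le_rsqrt)
  then have X: "2 * r * lam \<le> m * sqrt (2 * lam / m * L)" using m by (simp add: field_simps)
  have th0: "3 * r / (r + 3) \<ge> 0" using r0 by simp
  have F1: "(3 * r / (r + 3)) * (m * sqrt (2 * lam / m * L) + L / 3) \<ge> (3 * r / (r + 3)) * (2 * r * lam + L / 3)"
    using X th0 by (intro mult_left_mono) auto
  have ne: "r + 3 \<noteq> 0" using r0 by simp
  have h1: "(3 * r / (r + 3))^2 / (2 * (1 - (3 * r / (r + 3)) / 3)) = 3 * r^2 / (2 * (r + 3))"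
  proof -
    have "1 - (3 * r / (r + 3)) / 3 = 3 / (r + 3)" using ne by (simp add: field_simps)
    show ?thesis unfolding \<open>1 - (3 * r / (r + 3)) / 3 = 3 / (r + 3)\<close> by (rule aux1[OF ne])
  qed
  moreover have "(3 * r / (r + 3)) * (2 * r * lam + L / 3)
           - (3 * r / (r + 3))^2 / (2 * (1 - (3 * r / (r + 3)) / 3)) * lam = r^2 * lam * (2 * r + 9) / (2 * (r + 3))"
    unfolding h1 Leq by (rule aux3[OF ne])
  moreover have "r^2 * lam * (2 * r + 9) / (2 * (r + 3)) \<ge> r^2 * lam"
  proof -
    have "r^2 * lam * (2 * r + 6) \<le> r^2 * lam * (2 * r + 9)" using r0 lam by (intro mult_left_mono) auto
    then show ?thesis using r0 by (simp add: le_divide_eq algebra_simps)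
  qed
  ultimately show ?thesis using F1 Leq by linarith
qed

theorem mainTheorem3:
  fixes M :: "'w measure" and A :: "'a set" and p :: "'a \<Rightarrow> real"
    and X :: "nat \<Rightarrow> 'a \<Rightarrow> 'w \<Rightarrow> bool" and s :: nat and \<delta> :: real
  assumes "prob_space M"
    and "finite A"
    and "\<forall>u\<in>A. 0 \<le> p u \<and> p u \<le> 1"
    and "prob_space.indep_vars M (\<lambda>_. count_space UNIV) (\<lambda>(i, u). X i u) ({1..} \<times> A)"
    and "\<forall>i\<ge>1. \<forall>u\<in>A. distr M (count_space UNIV) (X i u) = measure_pmf (bernoulli_pmf (p u))"
    and "s \<ge> 3"
    and "0 < \<delta>" and "\<delta> < 1"
  shows "measure M {w \<in> space M.
           Rhat X A s w \<le> Rhat X A (s - 1) w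
             - (\<Sum>u\<in>A. p u) / (exp 1 * real (s - 2))
             - sqrt (2 * (\<Sum>u\<in>A. p u) / real (s - 1) * ln (1 / \<delta>))
             - ln (1 / \<delta>) / (3 * real (s - 1))} \<le> \<delta>"
proof -
  note P = assms(1) and finA = assms(2) and pA = assms(3) and ind = assms(4) and dist = assms(5)
  interpret prob_space M by fact
  define m where "m = s - 1"
  have sm: "s = Suc m" and m2: "m \<ge> 2" using assms(6) by (auto simp: m_def)
  define lam where "lam = (\<Sum>u\<in>A. p u)"
  define L where "L = ln (1 / \<delta>)"
  have L0: "L > 0" using assms(7,8) by (simp add: L_def)
  have expL: "exp (- L) = \<delta>" using assms(7) by (simp add: L_def ln_div)
  define c where "c = lam / (exp 1 * real (s - 2)) + sqrt (2 * lam / real (s - 1) * L) + L / (3 * real (s - 1))"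
  define T where "T = (\<lambda>u \<omega>. Tval m {i\<in>{1..Suc m}. X i u \<omega>})"
  have lam0: "lam \<ge> 0" unfolding lam_def using pA by (intro sum_nonneg) auto
  have mc: "m * c = lam * m / (exp 1 * (real m - 1)) + m * sqrt (2 * lam / m * L) + L / 3"
    using m2 by (simp add: c_def sm of_nat_diff field_simps)
  have Tsum: "(\<Sum>u\<in>A. T u \<omega>) = m * (Rhat X A m \<omega> - Rhat X A s \<omega>)" for \<omega>
  proof -
    have "T u \<omega> = U X m u \<omega> - m / Suc m * U X s u \<omega>" for u
    proof -
      have "{i\<in>{1..Suc m}. X i u \<omega>} - {Suc m} = {i\<in>{1..m}. X i u \<omega>}" by auto
      then show ?thesis by (simp add: T_def Tval_def U_def sm)
    qed
    then have "(\<Sum>u\<in>A. T u \<omega>) = (\<Sum>u\<in>A. U X m u \<omega>) - m / Suc m * (\<Sum>u\<in>A. U X s u \<omega>)"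
      by (simp add: sum_subtractf sum_distrib_left)
    also have "\<dots> = m * (Rhat X A m \<omega> - Rhat X A s \<omega>)"
      unfolding Rhat_def sm by (rule aux2) (use m2 in auto)
    finally show ?thesis .
  qed
  have sub: "{w \<in> space M.
           Rhat X A s w \<le> Rhat X A (s - 1) w
             - (\<Sum>u\<in>A. p u) / (exp 1 * real (s - 2))
             - sqrt (2 * (\<Sum>u\<in>A. p u) / real (s - 1) * ln (1 / \<delta>))
             - ln (1 / \<delta>) / (3 * real (s - 1))} = {w\<in>space M. m * c \<le> (\<Sum>u\<in>A. T u w)}"
  proof -
    have "Rhat X A s w \<le> Rhat X A m w - c \<longleftrightarrow> m * c \<le> m * (Rhat X A m w - Rhat X A s w)" for w
    proof -
      have "m * c \<le> m * (Rhat X A m w - Rhat X A s w) \<longleftrightarrow> c \<le> Rhat X A m w - Rhat X A s w"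
        using m2 by (intro mult_le_cancel_left_pos) auto
      then show ?thesis by linarith
    qed
    then show ?thesis unfolding Tsum by (simp add: c_def lam_def L_def m_def diff_diff_eq)
  qed
  have intu: "integrable M (\<lambda>\<omega>. exp (\<theta> * T u \<omega>))" if "u \<in> A" for u \<theta>
    unfolding T_def using mgf_u(1)[OF P ind dist that] pA that m2 by auto
  have Eu: "(\<integral>\<omega>. exp (\<theta> * T u \<omega>) \<partial>M) = MG m \<theta> (p u)" if "u \<in> A" for u \<theta>
    unfolding T_def using mgf_u(2)[OF P ind dist that] pA that m2 by auto
  have MG0: "MG m \<theta> (p u) \<ge> 0" if "u \<in> A" for u \<theta>
    unfolding Eu[OF that, symmetric] by (intro Bochner_Integration.integral_nonneg) auto
  have indep: "indep_vars (\<lambda>_. borel) (\<lambda>u \<omega>. exp (\<theta> * T u \<omega>)) A" for \<theta>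
  proof -
    define K where "K = (\<lambda>u::'a. {1..Suc m} \<times> {u})"
    have r: "indep_vars (\<lambda>u. PiM (K u) (\<lambda>_. count_space UNIV))
               (\<lambda>u \<omega>. restrict (\<lambda>k. (\<lambda>(i, u). X i u) k \<omega>) (K u)) A"
      using ind by (rule indep_vars_restrict) (auto simp: K_def disjoint_family_on_def)
    define Y where "Y = (\<lambda>u (v :: nat \<times> 'a \<Rightarrow> bool). exp (\<theta> * Tval m {i\<in>{1..Suc m}. v (i, u)}))"
    have "indep_vars (\<lambda>_. borel) (\<lambda>u \<omega>. Y u (restrict (\<lambda>k. (\<lambda>(i, u). X i u) k \<omega>) (K u))) A"
    proof (rule indep_vars_compose2[OF r])
      fix u assume "u \<in> A"
      have "PiM (K u) (\<lambda>_. count_space (UNIV :: bool set)) = count_space (PiE (K u) (\<lambda>_. UNIV))"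
        by (intro count_space_PiM_finite) (auto simp: K_def)
      then show "Y u \<in> borel_measurable (PiM (K u) (\<lambda>_. count_space UNIV))" by simp
    qed
    also have "?this \<longleftrightarrow> indep_vars (\<lambda>_. borel) (\<lambda>u \<omega>. exp (\<theta> * T u \<omega>)) A"
    proof (intro indep_vars_cong refl ext)
      fix u \<omega> assume "u \<in> A"
      have "{i\<in>{1..Suc m}. restrict (\<lambda>k. (\<lambda>(i, u). X i u) k \<omega>) (K u) (i, u)} = {i\<in>{1..Suc m}. X i u \<omega>}"
        by (auto simp: K_def)
      then show "Y u (restrict (\<lambda>k. (\<lambda>(i, u). X i u) k \<omega>) (K u)) = exp (\<theta> * T u \<omega>)"
        by (simp add: Y_def T_def)
    qed
    finally show ?thesis .
  qed
  have chernoff: "measure M {w\<in>space M. m * c \<le> (\<Sum>u\<in>A. T u w)} \<le> (\<Prod>u\<in>A. MG m \<theta> (p u)) / exp (\<theta> * (m * c))"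
    if th: "\<theta> > 0" for \<theta>
  proof -
    have "{w\<in>space M. m * c \<le> (\<Sum>u\<in>A. T u w)} = {w\<in>space M. (\<Prod>u\<in>A. exp (\<theta> * T u w)) \<ge> exp (\<theta> * (m * c))}"
      using th by (auto simp: exp_sum[OF finA, symmetric] sum_distrib_left[symmetric])
    also have "measure M \<dots> \<le> (\<integral>w. (\<Prod>u\<in>A. exp (\<theta> * T u w)) \<partial>M) / exp (\<theta> * (m * c))"
      by (intro integral_Markov_inequality_measure[where A="space M"] indep_vars_integrable[OF finA indep] intu)
         (auto intro!: prod_nonneg)
    also have "(\<integral>w. (\<Prod>u\<in>A. exp (\<theta> * T u w)) \<partial>M) = (\<Prod>u\<in>A. MG m \<theta> (p u))"
      by (subst indep_vars_lebesgue_integral[OF finA indep]) (auto intro: intu simp: Eu)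
    finally show ?thesis .
  qed
  show ?thesis
  proof (cases "lam = 0")
    case True
    then have p0: "p u = 0" if "u \<in> A" for u
      using pA finA that unfolding lam_def by (subst (asm) sum_nonneg_eq_0_iff) auto
    have P1: "(\<Prod>u\<in>A. MG m 3 (p u)) = 1" by (intro prod.neutral) (simp add: p0 MG_zero)
    have e3: "3 * (m * c) = L" using mc True by simp
    have "measure M {w\<in>space M. m * c \<le> (\<Sum>u\<in>A. T u w)} \<le> (\<Prod>u\<in>A. MG m 3 (p u)) / exp (3 * (m * c))"
      by (rule chernoff) simp
    also have "\<dots> = 1 / exp L" unfolding e3 P1 by simp
    also have "\<dots> = \<delta>" using expL by (simp add: exp_minus inverse_eq_divide)
    finally show ?thesis using sub by simp
  next
    case False
    then have lam_pos: "lam > 0" using lam0 by simp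
    define r where "r = sqrt (L / lam)"
    have r0: "r > 0" using lam_pos L0 by (simp add: r_def)
    define \<theta> where "\<theta> = 3 * r / (r + 3)"
    have th: "0 < \<theta>" "\<theta> < 3" using r0 by (auto simp: \<theta>_def field_simps)
    define \<psi> where "\<psi> = \<theta>^2 / (2 * (1 - \<theta>/3))"
    have "(\<Prod>u\<in>A. MG m \<theta> (p u)) \<le> (\<Prod>u\<in>A. exp (\<theta> * (p u * m / (exp 1 * (real m - 1))) + \<psi> * p u))"
    proof (intro prod_mono conjI)
      fix u assume u: "u \<in> A"
      show "0 \<le> MG m \<theta> (p u)" by (rule MG0[OF u])
      show "MG m \<theta> (p u) \<le> exp (\<theta> * (p u * m / (exp 1 * (real m - 1))) + \<psi> * p u)"
        unfolding \<psi>_def using pA u m2 th by (intro MG_bound) auto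
    qed
    also have "\<dots> = exp (\<theta> * (lam * m / (exp 1 * (real m - 1))) + \<psi> * lam)"
    proof -
      have "(\<Sum>u\<in>A. \<theta> * (p u * m / (exp 1 * (real m - 1))) + \<psi> * p u)
          = \<theta> * ((\<Sum>u\<in>A. p u) * m / (exp 1 * (real m - 1))) + \<psi> * (\<Sum>u\<in>A. p u)"
        by (simp add: sum.distrib flip: sum_distrib_left sum_divide_distrib sum_distrib_right)
      then show ?thesis by (simp add: exp_sum[OF finA, symmetric] lam_def)
    qed
    finally have "measure M {w\<in>space M. m * c \<le> (\<Sum>u\<in>A. T u w)}
        \<le> exp (\<theta> * (lam * m / (exp 1 * (real m - 1))) + \<psi> * lam) / exp (\<theta> * (m * c))"
      using chernoff[OF th(1)] by (smt (verit) divide_right_mono exp_gt_zero)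
    also have "\<dots> = exp (- (\<theta> * (m * sqrt (2 * lam / m * L) + L / 3) - \<psi> * lam))"
      unfolding mc by (simp add: exp_diff[symmetric] algebra_simps)
    also have "\<dots> \<le> exp (- L)"
      using final_ineq[OF lam_pos L0 _ r_def, of "real m"] m2 unfolding \<theta>_def \<psi>_def by simp
    finally show ?thesis using sub expL by simp
  qed
qed


end
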